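(* Let $\mathcal{P}$ be a set of $d$-dimensional $k$-templates and let $X$ be an infinite set. If $\mathcal{P}=\varnothing$, then $\chi(L(X^d,\mathcal{P}))=1$. If $\mathcal{P}\ne\varnothing$, then $\chi(L(X^d,\mathcal{P}))=|X|^{-(e-1)}$, where $e=\min\{e(P):P\in\mathcal{P}\}$.
   Context: A $d$-dimensional $k$-template ($2\le k<\omega$, $d<\omega$) is a set $P$ of $d$-tuples with $|P|=k$. A homomorphism between $d$-dimensional $k$-templates $P\to Q$ is a one-to-one map $f$ such that whenever $x,y\in P$, $i<d$ and $x_i=y_i$, then $f(x)_i=f(y)_i$; $Q$ is a homomorphic image of $P$ if such $f$ exists. For a set $\mathcal{P}$ of $d$-dimensional $k$-templates, $L(X^d,\mathcal{P})$ is the $k$-hypergraph with vertex set $X^d$ whose edges are the $k$-element subsets $Q\subseteq X^d$ that are homomorphic images of some $P\in\mathcal{P}$. A subset $I\subseteq d=\{0,\dots,d-1\}$ is a distinguisher for $P$ if whenever $x,y\in P$ are distinct then $x_i\ne y_i$ for some $i\in I$; $e(P)$ is the least cardinality of a distinguisher for $P$. A coloring $\varphi:V\to C$ of a $k$-hypergraph $(V,E)$ is proper if no edge is monochromatic; $\chi(H)$ is the least cardinal $\kappa$ admitting a proper $\kappa$-coloring. For an infinite cardinal $\kappa$ and $m<\omega$, $\kappa^{+m}$ is the $m$-th successor of $\kappa$, and $\kappa^{-m}$ is the least cardinal $\lambda$ with $\lambda^{+m}\ge\kappa$. *)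

theory Defs
  imports Main
begin

definition tuples :: "'b set \<Rightarrow> nat \<Rightarrow> 'b list set" where
  "tuples X d = {xs. length xs = d \<and> set xs \<subseteq> X}"

definition is_template :: "nat \<Rightarrow> nat \<Rightarrow> 'a list set \<Rightarrow> bool" where
  "is_template d k P \<longleftrightarrow> finite P \<and> card P = k \<and> (\<forall>x\<in>P. length x = d)"

definition template_hom :: "nat \<Rightarrow> 'a list set \<Rightarrow> 'b list set \<Rightarrow> ('a list \<Rightarrow> 'b list) \<Rightarrow> bool" where
  "template_hom d P Q f \<longleftrightarrow> f ` P \<subseteq> Q \<and> inj_on f P \<and>
     (\<forall>x\<in>P. \<forall>y\<in>P. \<forall>i<d. x ! i = y ! i \<longrightarrow> f x ! i = f y ! i)"

definition hom_image :: "nat \<Rightarrow> 'a list set \<Rightarrow> 'b list set \<Rightarrow> bool" where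
  "hom_image d P Q \<longleftrightarrow> (\<exists>f. template_hom d P Q f)"

definition L_edges :: "'b set \<Rightarrow> nat \<Rightarrow> nat \<Rightarrow> 'a list set set \<Rightarrow> 'b list set set" where
  "L_edges X d k \<P> = {Q. Q \<subseteq> tuples X d \<and> finite Q \<and> card Q = k \<and> (\<exists>P\<in>\<P>. hom_image d P Q)}"

definition distinguisher :: "nat \<Rightarrow> 'a list set \<Rightarrow> nat set \<Rightarrow> bool" where
  "distinguisher d P I \<longleftrightarrow> I \<subseteq> {..<d} \<and>
     (\<forall>x\<in>P. \<forall>y\<in>P. x \<noteq> y \<longrightarrow> (\<exists>i\<in>I. x ! i \<noteq> y ! i))"

definition e_num :: "nat \<Rightarrow> 'a list set \<Rightarrow> nat" where
  "e_num d P = (LEAST n. \<exists>I. distinguisher d P I \<and> card I = n)"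

definition proper_coloring :: "'v set \<Rightarrow> 'v set set \<Rightarrow> 'c set \<Rightarrow> ('v \<Rightarrow> 'c) \<Rightarrow> bool" where
  "proper_coloring V E C \<phi> \<longleftrightarrow> \<phi> ` V \<subseteq> C \<and>
     (\<forall>Q\<in>E. \<exists>u\<in>Q. \<exists>v\<in>Q. \<phi> u \<noteq> \<phi> v)"

(* |K| is the chromatic number of (V,E): K admits a proper colouring and
   |K| \<le> |C| for every colour set C (of the same type) admitting one *)
definition chromatic_number_is :: "'v set \<Rightarrow> 'v set set \<Rightarrow> 'c set \<Rightarrow> bool" where
  "chromatic_number_is V E K \<longleftrightarrow> (\<exists>\<phi>. proper_coloring V E K \<phi>) \<and>
     (\<forall>C::'c set. (\<exists>\<phi>. proper_coloring V E C \<phi>) \<longrightarrow> (card_of K, card_of C) \<in> ordLeq)"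

(* csucc_rel m A B: |B| = |A|^{+m} (iterated cardinal successor) *)
fun csucc_rel :: "nat \<Rightarrow> 'u set \<Rightarrow> 'u set \<Rightarrow> bool" where
  "csucc_rel 0 A B \<longleftrightarrow> (card_of B, card_of A) \<in> ordIso"
| "csucc_rel (Suc m) A B \<longleftrightarrow> (\<exists>C. csucc_rel m A C \<and> (card_of B, cardSuc (card_of C)) \<in> ordIso)"

(* |A|^{+m} \<ge> |X|, phrased as "not |A|^{+m} < |X|" (all cardinals below |X|
   are realised by sets of the type of X) *)
definition succ_ge :: "nat \<Rightarrow> 'u set \<Rightarrow> 'u set \<Rightarrow> bool" where
  "succ_ge m A X \<longleftrightarrow> \<not> (\<exists>B. csucc_rel m A B \<and> (card_of B, card_of X) \<in> ordLess)"

(* |K| = |X|^{-m}: least cardinal \<lambda> with \<lambda>^{+m} \<ge> |X| *)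
definition card_minus_is :: "'u set \<Rightarrow> nat \<Rightarrow> 'u set \<Rightarrow> bool" where
  "card_minus_is X m K \<longleftrightarrow> succ_ge m K X \<and>
     (\<forall>A. succ_ge m A X \<longrightarrow> (card_of K, card_of A) \<in> ordLeq)"

end

theory Submission
  imports Defs "HOL-Library.Countable"
begin

unbundle cardinal_syntax


lemma fin_less: "finite A \<Longrightarrow> infinite B \<Longrightarrow> |A| <o |B|"
  using finite_ordLess_infinite[OF card_of_Well_order card_of_Well_order] by (simp add: Field_card_of)

lemma wo_total: "|A| <o |B| \<or> |B| \<le>o |A|"
  using ordLess_or_ordLeq[OF card_of_Well_order card_of_Well_order] .

fun WSm :: "nat \<Rightarrow> 'b set \<Rightarrow> 'b set \<Rightarrow> bool" where
  "WSm 0 K Y = ( |Y| \<le>o |K| )"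
| "WSm (Suc m) K Y = (\<forall>y\<in>Y. WSm m K (under |Y| y))"

lemma under_card_sub: "under |Y| y \<subseteq> Y"
  using under_Field[of "|Y|" y] by (simp add: Field_card_of)

lemma WS_small: "|Y| \<le>o |K| \<Longrightarrow> WSm m K Y"
proof (induction m arbitrary: Y)
  case 0 then show ?case by simp
next
  case (Suc m)
  show ?case
  proof (simp, intro ballI)
    fix y assume "y \<in> Y"
    have "|under |Y| y| \<le>o |Y|" using card_of_mono1[OF under_card_sub] .
    then show "WSm m K (under |Y| y)" using Suc ordLeq_transitive by blast
  qed
qed

lemma csucc_mono: "csucc_rel m A B \<Longrightarrow> |A| \<le>o |B|"
proof (induction m arbitrary: B)
  case 0 then show ?case using ordIso_iff_ordLeq by auto
next
  case (Suc m)
  then obtain C where C: "csucc_rel m A C" "|B| =o cardSuc |C|" by auto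
  have "|A| \<le>o |C|" using Suc C by blast
  moreover have "|C| \<le>o cardSuc |C|" by (simp add: cardSuc_ordLeq card_of_Card_order)
  ultimately show ?case using C(2) ordIso_iff_ordLeq ordLeq_transitive by metis
qed

lemma bridge: "infinite K \<Longrightarrow> \<not>(\<exists>B. csucc_rel m K B \<and> |B| <o |Y| ) \<Longrightarrow> WSm m K Y"
proof (induction m arbitrary: Y)
  case 0
  then have "\<not> |K| <o |Y|" using card_of_refl by auto
  then show ?case using wo_total by auto
next
  case (Suc m)
  show ?case
  proof (cases "|Y| \<le>o |K|")
    case True then show ?thesis by (rule WS_small)
  next
    case False
    then have KY: "|K| <o |Y|" using wo_total by blast
    have infY: "infinite Y" using KY Suc.prems(1) card_of_ordLeq_finite ordLess_imp_ordLeq by blast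
    show ?thesis
    proof (simp, intro ballI)
      fix y assume yY: "y \<in> Y"
      let ?U = "under |Y| y"
      show "WSm m K ?U"
      proof (cases "|?U| \<le>o |K|")
        case True then show ?thesis by (rule WS_small)
      next
        case F2: False
        then have infU: "infinite ?U" using fin_less Suc.prems(1) ordLess_imp_ordLeq by blast
        have U: "?U = underS |Y| y \<union> {y}"
          using Refl_under_underS[of "|Y|" y] yY card_of_well_order_on[of Y]
          by (auto simp add: Field_card_of order_on_defs)
        have "|underS |Y| y| <o |Y|" using card_of_underS[OF card_of_Card_order, of y Y] yY
          by (simp add: Field_card_of)
        moreover have "|{y}| <o |Y|" using fin_less infY by blast
        ultimately have UY: "|?U| <o |Y|" using U card_of_Un_ordLess_infinite infY by metis
        show ?thesis
        proof (rule Suc.IH[OF Suc.prems(1)], rule notI)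
          assume "\<exists>B. csucc_rel m K B \<and> |B| <o |?U|"
          then obtain B where B: "csucc_rel m K B" "|B| <o |?U|" by blast
          have cs: "cardSuc |B| \<le>o |?U|"
            using B(2) cardSuc_ordLess_ordLeq card_of_Card_order by blast
          have "|Field (cardSuc |B| )| =o cardSuc |B|"
            by (simp add: card_of_Field_ordIso cardSuc_Card_order card_of_Card_order)
          then have "|Field (cardSuc |B| )| \<le>o |?U|" using cs ordIso_ordLeq_trans by blast
          then obtain B' where B': "B' \<subseteq> ?U" "|Field (cardSuc |B| )| =o |B'|"
            using internalize_card_of_ordLeq[of "Field (cardSuc |B| )" "|?U|"]
            by (auto simp: Field_card_of)
          have "|B'| =o cardSuc |B|"
            using B'(2) \<open>|Field (cardSuc |B| )| =o cardSuc |B|\<close> ordIso_symmetric ordIso_transitive by blast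
          then have "csucc_rel (Suc m) K B'" using B(1) by auto
          moreover have "|B'| <o |Y|" using card_of_mono1[OF B'(1)] UY ordLeq_ordLess_trans by blast
          ultimately show False using Suc.prems(2) by blast
        qed
      qed
    qed
  qed
qed



lemma FL: "infinite V \<Longrightarrow> |W| \<le>o |V| \<Longrightarrow> |{xs. length xs = n \<and> set xs \<subseteq> W}| \<le>o |V|"
proof (induction n)
  case 0
  have "{xs. length xs = 0 \<and> set xs \<subseteq> W} = {[]}" by auto
  then show ?case using fin_less[of "{[]}" V] 0 ordLess_imp_ordLeq by auto
next
  case (Suc n)
  have eq: "{xs. length xs = Suc n \<and> set xs \<subseteq> W} = (\<lambda>(a,xs). a # xs) ` (W \<times> {xs. length xs = n \<and> set xs \<subseteq> W})"
    by (auto simp: length_Suc_conv image_def)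
  have "|W \<times> {xs. length xs = n \<and> set xs \<subseteq> W}| \<le>o |V|"
    by (rule card_of_Times_ordLeq_infinite_Field) (simp_all add: Field_card_of card_of_card_order_on Suc)
  then show ?case unfolding eq using card_of_image ordLeq_transitive by blast
qed

lemma maxex: "finite A \<Longrightarrow> A \<noteq> {} \<Longrightarrow> A \<subseteq> Y \<Longrightarrow> \<exists>M\<in>A. \<forall>a\<in>A. (a, M) \<in> |Y|"
proof (induction A rule: finite_ne_induct)
  case (singleton x)
  have "refl_on Y |Y|" using card_of_well_order_on[of Y] by (simp add: order_on_defs)
  then show ?case using singleton by (auto simp: refl_on_def)
next
  case (insert x F)
  then obtain M where M: "M \<in> F" "\<forall>a\<in>F. (a, M) \<in> |Y|" by auto
  have wo: "well_order_on Y |Y|" by (rule card_of_well_order_on)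
  then have tot: "total_on Y |Y|" "refl_on Y |Y|" "trans |Y|" by (auto simp: order_on_defs)
  have xY: "x \<in> Y" "M \<in> Y" using insert M by auto
  show ?case
  proof (cases "(x, M) \<in> |Y|")
    case True then show ?thesis using M by auto
  next
    case False
    then have "(M, x) \<in> |Y|" using tot(1,2) xY unfolding total_on_def refl_on_def by (cases "x = M") auto
    moreover have "(x,x) \<in> |Y|" using tot(2) xY by (auto simp: refl_on_def)
    ultimately have "\<forall>a\<in>insert x F. (a, x) \<in> |Y|" using M tot(3) by (auto dest: transD)
    then show ?thesis by blast
  qed
qed

definition dist_col :: "'b set \<Rightarrow> nat \<Rightarrow> nat \<Rightarrow> 'b set \<Rightarrow> ('b list \<Rightarrow> nat list \<times> 'b) \<Rightarrow> bool" where
  "dist_col K m d Y \<phi> \<longleftrightarrow> (\<forall>x\<in>tuples Y d. length (fst (\<phi> x)) \<le> m \<and> set (fst (\<phi> x)) \<subseteq> {..<d} \<and> snd (\<phi> x) \<in> K \<and>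
      (\<forall>y\<in>tuples Y d. \<phi> x = \<phi> y \<longrightarrow> x \<noteq> y \<longrightarrow> (\<exists>i\<in>set (fst (\<phi> x)). x!i \<noteq> y!i)))"

lemma UB: "infinite K \<Longrightarrow> WSm m K Y \<Longrightarrow> \<exists>\<phi>. dist_col K m d Y \<phi>"
proof (induction m arbitrary: Y)
  case 0
  then have "|tuples Y d| \<le>o |K|" using FL[of K Y d] by (simp add: tuples_def)
  then obtain h where h: "inj_on h (tuples Y d)" "h ` tuples Y d \<subseteq> K"
    using card_of_ordLeq[of "tuples Y d" K] by blast
  show ?case
    by (rule exI[of _ "\<lambda>x. ([], h x)"]) (use h in \<open>auto simp: dist_col_def inj_on_def\<close>)
next
  case (Suc m)
  from Suc.prems have "\<forall>y\<in>Y. \<exists>\<phi>. dist_col K m d (under |Y| y) \<phi>" using Suc.IH by auto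
  then obtain F where F: "\<forall>y\<in>Y. dist_col K m d (under |Y| y) (F y)" by metis
  have "K \<noteq> {}" using Suc.prems(1) by auto
  then obtain k0 where k0: "k0 \<in> K" by blast
  show ?case
  proof (cases "d = 0")
    case True
    then have "tuples Y d = {[]}" by (auto simp: tuples_def)
    then show ?thesis by (intro exI[of _ "\<lambda>x. ([], k0)"]) (auto simp: dist_col_def k0)
  next
    case False
    define Mx where "Mx x = (SOME M. M \<in> set x \<and> (\<forall>a\<in>set x. (a, M) \<in> |Y| ))" for x
    define jx where "jx x = (SOME j. j < d \<and> x ! j = Mx x)" for x
    have Mx: "Mx x \<in> set x \<and> (\<forall>a\<in>set x. (a, Mx x) \<in> |Y| )" if "x \<in> tuples Y d" for x
    proof -
      have "\<exists>M. M \<in> set x \<and> (\<forall>a\<in>set x. (a, M) \<in> |Y| )"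
        using maxex[of "set x" Y] that False by (auto simp: tuples_def)
      then show ?thesis unfolding Mx_def by (rule someI_ex)
    qed
    have jx: "jx x < d \<and> x ! jx x = Mx x" if "x \<in> tuples Y d" for x
    proof -
      have "\<exists>j. j < d \<and> x ! j = Mx x" using Mx[OF that] that by (auto simp: tuples_def in_set_conv_nth)
      then show ?thesis unfolding jx_def by (rule someI_ex)
    qed
    have inU: "x \<in> tuples (under |Y| (Mx x)) d" "Mx x \<in> Y" if "x \<in> tuples Y d" for x
      using Mx[OF that] that by (auto simp: tuples_def under_def)
    define \<phi> where "\<phi> x = (jx x # fst (F (Mx x) x), snd (F (Mx x) x))" for x
    have "dist_col K (Suc m) d Y \<phi>"
      unfolding dist_col_def
    proof (intro ballI conjI impI)
      fix x assume x: "x \<in> tuples Y d"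
      have Fx: "dist_col K m d (under |Y| (Mx x)) (F (Mx x))" using F inU(2)[OF x] by auto
      then show "length (fst (\<phi> x)) \<le> Suc m" "set (fst (\<phi> x)) \<subseteq> {..<d}" "snd (\<phi> x) \<in> K"
        using inU(1)[OF x] jx[OF x] unfolding dist_col_def \<phi>_def by auto
      fix y assume y: "y \<in> tuples Y d" and eq: "\<phi> x = \<phi> y" and ne: "x \<noteq> y"
      show "\<exists>i\<in>set (fst (\<phi> x)). x ! i \<noteq> y ! i"
      proof (rule ccontr)
        assume "\<not> ?thesis"
        then have all: "\<forall>i\<in>set (fst (\<phi> x)). x ! i = y ! i" by blast
        have jj: "jx x = jx y" using eq by (simp add: \<phi>_def)
        have "x ! jx x = y ! jx x" using all by (simp add: \<phi>_def)
        then have MM: "Mx x = Mx y" using jx[OF x] jx[OF y] jj by simp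
        have FF: "F (Mx x) x = F (Mx x) y" using eq MM by (simp add: \<phi>_def prod_eq_iff)
        have yU: "y \<in> tuples (under |Y| (Mx x)) d" using inU(1)[OF y] MM by simp
        obtain i where "i \<in> set (fst (F (Mx x) x))" "x ! i \<noteq> y ! i"
          using Fx inU(1)[OF x] yU FF ne unfolding dist_col_def by blast
        then show False using all by (simp add: \<phi>_def)
      qed
    qed
    then show ?thesis by blast
  qed
qed



definition gpt :: "nat list \<Rightarrow> 'b list list \<Rightarrow> 'b list \<Rightarrow> 'b list \<Rightarrow> bool" where
  "gpt is Ls x0 y \<longleftrightarrow> length y = length x0 \<and> (\<forall>i<length x0. i \<notin> set is \<longrightarrow> y!i = x0!i)
     \<and> (\<forall>t<length is. y!(is!t) \<in> set (Ls!t))"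

lemma dlist_sub: "finite S \<Longrightarrow> n \<le> card S \<Longrightarrow> \<exists>l. distinct l \<and> length l = n \<and> set l \<subseteq> S"
proof -
  assume "finite S" "n \<le> card S"
  then obtain T where T: "T \<subseteq> S" "card T = n" "finite T" by (meson obtain_subset_with_card_n)
  then obtain l where "set l = T" "distinct l" using finite_distinct_list by blast
  then show ?thesis using T distinct_card by fastforce
qed

lemma dlist_inf: "infinite A \<Longrightarrow> \<exists>l. distinct l \<and> length l = n \<and> set l \<subseteq> A"
proof -
  assume "infinite A"
  then obtain B where "finite B" "card B = n" "B \<subseteq> A" using infinite_arbitrarily_large by blast
  then show ?thesis using dlist_sub[of B n] by auto
qed

lemma PH: assumes "infinite A" "g ` A \<subseteq> T" "|T| <o |A|" shows "\<exists>v. infinite {a\<in>A. g a = v}"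
proof (rule ccontr)
  assume "\<not> ?thesis"
  then have fin: "\<forall>v. finite {a\<in>A. g a = v}" by blast
  have Aeq: "A = (\<Union>v\<in>T. {a\<in>A. g a = v})" using assms(2) by auto
  show False
  proof (cases "finite T")
    case True
    then have "finite A" using fin by (subst Aeq) auto
    then show False using assms(1) by simp
  next
    case False
    have "\<forall>v\<in>T. |{a\<in>A. g a = v}| \<le>o |T|" using fin fin_less[OF _ False] ordLess_imp_ordLeq by blast
    then have "|\<Union>v\<in>T. {a\<in>A. g a = v}| \<le>o |T|"
      using card_of_UNION_ordLeq_infinite[OF False card_of_mono1[OF subset_refl], where A="\<lambda>v. {a\<in>A. g a = v}"] by blast
    then have "|A| \<le>o |T|" using Aeq by simp
    then show False using assms(3) not_ordLess_ordLeq by blast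
  qed
qed

lemma TL: assumes "infinite M" "|P| \<le>o |M|" "|Q| \<le>o |M|" "|M| <o |A|" shows "|P \<times> Q| <o |A|"
proof -
  have "|P \<times> Q| \<le>o |M|"
    by (rule card_of_Times_ordLeq_infinite_Field) (simp_all add: Field_card_of card_of_card_order_on assms)
  then show ?thesis using assms(4) ordLeq_ordLess_trans by blast
qed

definition chainP :: "'c set \<Rightarrow> 'b set list \<Rightarrow> bool" where
  "chainP C As \<longleftrightarrow> (\<forall>t<length As. infinite (As!t) \<and> |C| <o |As!t| \<and>
     (\<forall>s. t < s \<and> s < length As \<longrightarrow> As!s \<subseteq> As!t \<and> |As!s| <o |As!t| ))"

lemma chainP_Cons: assumes "chainP C (A # As)" shows "chainP C As"
  unfolding chainP_def
proof (intro allI impI)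
  fix t assume t: "t < length As"
  have h: "infinite (As!t) \<and> |C| <o |As!t| \<and> (\<forall>s. Suc t < s \<and> s < length (A#As) \<longrightarrow> (A#As)!s \<subseteq> As!t \<and> |(A#As)!s| <o |As!t| )"
    using assms[unfolded chainP_def, rule_format, of "Suc t"] t by simp
  show "infinite (As!t) \<and> |C| <o |As!t| \<and> (\<forall>s. t < s \<and> s < length As \<longrightarrow> As!s \<subseteq> As!t \<and> |As!s| <o |As!t| )"
  proof (intro conjI allI impI)
    fix s assume "t < s \<and> s < length As"
    then show "As!s \<subseteq> As!t" "|As!s| <o |As!t|" using h[THEN conjunct2, THEN conjunct2, rule_format, of "Suc s"] by simp_all
  qed (use h in auto)
qed

lemma chainP_at: assumes "chainP C As" "t < length As" shows "infinite (As!t) \<and> |C| <o |As!t|"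
  using assms(1)[unfolded chainP_def, rule_format, OF assms(2)] by simp

lemma chainP_lt: assumes "chainP C As" "t < s" "s < length As" shows "As!s \<subseteq> As!t \<and> |As!s| <o |As!t|"
proof -
  have "t < length As" using assms by simp
  from assms(1)[unfolded chainP_def, rule_format, OF this] have "\<forall>s. t < s \<and> s < length As \<longrightarrow> As!s \<subseteq> As!t \<and> |As!s| <o |As!t|" by simp
  then show ?thesis using assms(2,3) by simp
qed

lemma GI:
  fixes c :: "'b list \<Rightarrow> 'c"
  assumes "c ` tuples X d \<subseteq> C" "distinct is" "set is \<subseteq> {..<d}" "length As = length is"
    "\<forall>t<length is. As!t \<subseteq> X" "chainP C As" "x0 \<in> tuples X d"
  shows "\<exists>Ls \<gamma>. \<gamma> \<in> C \<and> length Ls = length is \<and>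
    (\<forall>t<length is. length (Ls!t) = n \<and> distinct (Ls!t) \<and> set (Ls!t) \<subseteq> As!t) \<and>
    (\<forall>y\<in>tuples X d. gpt is Ls x0 y \<longrightarrow> c y = \<gamma>)"
  using assms(2-)
proof (induction "is" arbitrary: As x0)
  case Nil
  have "y = x0" if "y \<in> tuples X d" "gpt [] [] x0 y" for y
    using that by (intro nth_equalityI) (auto simp: gpt_def)
  then show ?case using Nil assms(1) by (intro exI[of _ "[]"] exI[of _ "c x0"]) auto
next
  case (Cons j is')
  obtain A0 As' where As: "As = A0 # As'" using Cons.prems(3) by (cases As) auto
  have jd: "j < d" using Cons.prems(2) by simp
  have A0X: "A0 \<subseteq> X" using Cons.prems(4) As by force
  have ch': "chainP C As'" using Cons.prems(5) As chainP_Cons by blast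
  have x0a: "x0[j := a] \<in> tuples X d" if "a \<in> A0" for a
    using Cons.prems(6) that A0X set_update_subset_insert[of x0 j a] by (auto simp: tuples_def)
  define Pr where "Pr a LG \<longleftrightarrow> snd LG \<in> C \<and> length (fst LG) = length is' \<and>
    (\<forall>t<length is'. length (fst LG!t) = n \<and> distinct (fst LG!t) \<and> set (fst LG!t) \<subseteq> As'!t) \<and>
    (\<forall>y\<in>tuples X d. gpt is' (fst LG) (x0[j := a]) y \<longrightarrow> c y = snd LG)" for a LG
  have "\<forall>a\<in>A0. \<exists>LG. Pr a LG"
  proof
    fix a assume "a \<in> A0"
    have "\<forall>t<length is'. As'!t \<subseteq> X"
    proof (intro allI impI)
      fix t assume "t < length is'"
      then show "As'!t \<subseteq> X" using Cons.prems(4)[rule_format, of "Suc t"] As by simp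
    qed
    then have "\<exists>Ls \<gamma>. \<gamma> \<in> C \<and> length Ls = length is' \<and>
      (\<forall>t<length is'. length (Ls!t) = n \<and> distinct (Ls!t) \<and> set (Ls!t) \<subseteq> As'!t) \<and>
      (\<forall>y\<in>tuples X d. gpt is' Ls (x0[j:=a]) y \<longrightarrow> c y = \<gamma>)"
      using Cons.prems As by (intro Cons.IH ch' x0a[OF \<open>a\<in>A0\<close>]) auto
    then obtain Ls \<gamma> where "\<gamma> \<in> C \<and> length Ls = length is' \<and>
      (\<forall>t<length is'. length (Ls!t) = n \<and> distinct (Ls!t) \<and> set (Ls!t) \<subseteq> As'!t) \<and>
      (\<forall>y\<in>tuples X d. gpt is' Ls (x0[j:=a]) y \<longrightarrow> c y = \<gamma>)" by blast
    then have "Pr a (Ls, \<gamma>)" unfolding Pr_def by simp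
    then show "\<exists>LG. Pr a LG" by blast
  qed
  then obtain G where G: "\<forall>a\<in>A0. Pr a (G a)" using bchoice by blast
  define T1 where "T1 = {Ls. length Ls = length is' \<and> (\<forall>t<length is'. length (Ls!t) = n \<and> set (Ls!t) \<subseteq> As'!t)}"
  have GT: "G ` A0 \<subseteq> T1 \<times> C"
  proof (rule image_subsetI)
    fix a assume "a \<in> A0"
    then have "Pr a (G a)" using G by blast
    then show "G a \<in> T1 \<times> C" unfolding Pr_def T1_def by (cases "G a") auto
  qed
  have c0: "infinite A0" "|C| <o |A0|" using chainP_at[OF Cons.prems(5), of 0] As by auto
  have bound: "|T1 \<times> C| <o |A0|"
  proof (cases "is' = []")
    case True
    then have eq: "T1 \<times> C = (\<lambda>g. ([], g)) ` C" by (auto simp: T1_def)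
    show ?thesis unfolding eq by (rule ordLeq_ordLess_trans[OF card_of_image c0(2)])
  next
    case False
    then have len: "length As' > 0" using Cons.prems(3) As by auto
    define V where "V = As'!0"
    have V1: "infinite V" using chainP_at[OF ch', of 0] len unfolding V_def by simp
    have V2: "|V| <o |A0|" using chainP_lt[OF Cons.prems(5), of 0 1] len unfolding V_def As by simp
    note V = V1 V2
    have sub: "As'!t \<subseteq> V" if "t < length is'" for t
    proof (cases t)
      case 0 then show ?thesis by (simp add: V_def)
    next
      case (Suc t')
      then show ?thesis using chainP_lt[OF ch', of 0 t] that Cons.prems(3) As unfolding V_def by auto
    qed
    define W where "W = {xs. length xs = n \<and> set xs \<subseteq> V}"
    have "T1 \<subseteq> {Ls. length Ls = length is' \<and> set Ls \<subseteq> W}"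
    proof
      fix Ls assume "Ls \<in> T1"
      then have h: "length Ls = length is'" "\<forall>t<length is'. length (Ls!t) = n \<and> set (Ls!t) \<subseteq> As'!t"
        by (auto simp: T1_def)
      have "set Ls \<subseteq> W"
      proof
        fix xs assume "xs \<in> set Ls"
        then obtain t where t: "t < length Ls" "xs = Ls!t" by (auto simp: in_set_conv_nth)
        then have "length xs = n" "set xs \<subseteq> As'!t" using h by auto
        then show "xs \<in> W" using sub[of t] t h(1) unfolding W_def by auto
      qed
      then show "Ls \<in> {Ls. length Ls = length is' \<and> set Ls \<subseteq> W}" using h by simp
    qed
    moreover have "|W| \<le>o |V|" unfolding W_def by (rule FL[OF V(1) card_of_mono1[OF subset_refl]])
    then have "|{Ls. length Ls = length is' \<and> set Ls \<subseteq> W}| \<le>o |V|" by (rule FL[OF V(1)])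
    ultimately have T1V: "|T1| \<le>o |V|" using card_of_mono1 ordLeq_transitive by blast
    show ?thesis
    proof (cases "|C| \<le>o |V|")
      case True
      show ?thesis by (rule TL[OF V(1) T1V True V(2)])
    next
      case False
      then have VC: "|V| \<le>o |C|" using wo_total ordLess_imp_ordLeq by blast
      then have "infinite C" using V(1) card_of_ordLeq_infinite by blast
      then show ?thesis by (rule TL[OF _ ordLeq_transitive[OF T1V VC] card_of_mono1[OF subset_refl] c0(2)])
    qed
  qed
  obtain v where v: "infinite {a\<in>A0. G a = v}" using PH[OF c0(1) GT bound] by blast
  obtain l where l: "distinct l" "length l = n" "set l \<subseteq> {a\<in>A0. G a = v}" using dlist_inf[OF v] by blast
  obtain a1 where a1: "a1 \<in> A0" "G a1 = v" using v not_finite_existsD by auto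
  obtain Ls' \<gamma> where v2: "v = (Ls', \<gamma>)" by (cases v)
  have Pa1: "Pr a1 (Ls', \<gamma>)" using G a1 v2 by auto
  show ?case
  proof (intro exI[of _ "l # Ls'"] exI[of _ \<gamma>] conjI)
    show "\<gamma> \<in> C" "length (l # Ls') = length (j # is')" using Pa1 unfolding Pr_def by auto
    show "\<forall>t<length (j # is'). length ((l # Ls') ! t) = n \<and> distinct ((l # Ls') ! t) \<and> set ((l # Ls') ! t) \<subseteq> As ! t"
    proof (intro allI impI)
      fix t assume "t < length (j # is')"
      then show "length ((l # Ls') ! t) = n \<and> distinct ((l # Ls') ! t) \<and> set ((l # Ls') ! t) \<subseteq> As ! t"
        using l Pa1 As unfolding Pr_def by (cases t) auto
    qed
    show "\<forall>y\<in>tuples X d. gpt (j # is') (l # Ls') x0 y \<longrightarrow> c y = \<gamma>"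
    proof (intro ballI impI)
      fix y assume y: "y \<in> tuples X d" and g: "gpt (j # is') (l # Ls') x0 y"
      let ?a = "y ! j"
      have aS: "?a \<in> set l" using g unfolding gpt_def by (auto dest: spec[of _ 0])
      then have aA: "?a \<in> A0" "G ?a = (Ls', \<gamma>)" using l v2 by auto
      have lx0: "length x0 = d" using Cons.prems(6) by (simp add: tuples_def)
      have "gpt is' Ls' (x0[j := ?a]) y"
        unfolding gpt_def
      proof (intro conjI allI impI)
        show "length y = length (x0[j := ?a])" using g by (simp add: gpt_def)
        fix i assume "i < length (x0[j := ?a])" "i \<notin> set is'"
        then show "y ! i = x0[j := ?a] ! i" using g lx0 jd by (cases "i = j") (auto simp: gpt_def)
      next
        fix t assume "t < length is'"
        then show "y ! (is' ! t) \<in> set (Ls' ! t)" using g unfolding gpt_def by (auto dest: spec[of _ "Suc t"])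
      qed
      then show "c y = \<gamma>" using G aA y unfolding Pr_def by auto
    qed
  qed
qed



lemma chainP_ConsI:
  assumes "chainP C As" "infinite A" "|C| <o |A|" "\<forall>s<length As. As!s \<subseteq> A \<and> |As!s| <o |A|"
  shows "chainP C (A # As)"
  unfolding chainP_def
proof (intro allI impI)
  fix t assume t: "t < length (A # As)"
  show "infinite ((A # As) ! t) \<and> |C| <o |(A # As) ! t| \<and>
          (\<forall>s. t < s \<and> s < length (A # As) \<longrightarrow> (A # As) ! s \<subseteq> (A # As) ! t \<and> |(A # As) ! s| <o |(A # As) ! t| )"
  proof (cases t)
    case 0
    show ?thesis
    proof (intro conjI allI impI)
      fix s assume s: "t < s \<and> s < length (A # As)"
      then obtain s' where "s = Suc s'" "s' < length As" using 0 by (cases s) auto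
      then show "(A # As) ! s \<subseteq> (A # As) ! t" "|(A # As) ! s| <o |(A # As) ! t|" using assms(4) 0 by auto
    qed (use assms 0 in auto)
  next
    case (Suc t')
    then have t': "t' < length As" using t by simp
    show ?thesis
    proof (intro conjI allI impI)
      fix s assume s: "t < s \<and> s < length (A # As)"
      then obtain s' where s': "s = Suc s'" "t' < s'" "s' < length As" using Suc by (cases s) auto
      show "(A # As) ! s \<subseteq> (A # As) ! t" "|(A # As) ! s| <o |(A # As) ! t|"
        using chainP_lt[OF assms(1) s'(2,3)] s'(1) Suc by auto
    qed (use chainP_at[OF assms(1) t'] Suc in auto)
  qed
qed

lemma CH: "csucc_rel m C B \<Longrightarrow> infinite C \<Longrightarrow> |B| <o |Y| \<Longrightarrow>
  \<exists>As. length As = Suc m \<and> (\<forall>t<Suc m. As!t \<subseteq> Y) \<and> chainP C As"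
proof (induction m arbitrary: B Y)
  case 0
  then have CY: "|C| <o |Y|" using ordIso_ordLess_trans[OF ordIso_symmetric] by auto
  then have "infinite Y" using 0(2) card_of_ordLeq_infinite ordLess_imp_ordLeq by blast
  then have "chainP C [Y]" using CY unfolding chainP_def by auto
  then show ?case by (intro exI[of _ "[Y]"]) auto
next
  case (Suc m)
  obtain B' where B': "csucc_rel m C B'" "|B| =o cardSuc |B'|" using Suc.prems(1) by auto
  have "|B| \<le>o |Y|" using Suc.prems(3) ordLess_imp_ordLeq by blast
  then obtain Y' where Y': "Y' \<subseteq> Y" "|B| =o |Y'|"
    using internalize_card_of_ordLeq[of B "|Y|"] by (auto simp: Field_card_of)
  have "|B'| <o cardSuc |B'|" by (simp add: cardSuc_greater card_of_Card_order)
  then have "|B'| <o |Y'|" using B'(2) Y'(2) ordLess_ordIso_trans ordIso_symmetric ordIso_transitive by metis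
  then obtain As' where As': "length As' = Suc m" "\<forall>t<Suc m. As'!t \<subseteq> Y'" "chainP C As'"
    using Suc.IH[OF B'(1) Suc.prems(2)] by blast
  have Y'Y: "|Y'| <o |Y|" using Y'(2) Suc.prems(3) ordIso_ordLess_trans ordIso_symmetric by blast
  have CY: "|C| <o |Y|" using csucc_mono[OF Suc.prems(1)] Suc.prems(3) ordLeq_ordLess_trans by blast
  have infY: "infinite Y" using CY Suc.prems(2) card_of_ordLeq_infinite ordLess_imp_ordLeq by blast
  have "\<forall>s<length As'. As'!s \<subseteq> Y \<and> |As'!s| <o |Y|"
  proof (intro allI impI conjI)
    fix s assume "s < length As'"
    then have "As'!s \<subseteq> Y'" using As' by auto
    then show "As'!s \<subseteq> Y" "|As'!s| <o |Y|" using Y'(1) card_of_mono1 Y'Y ordLeq_ordLess_trans by blast+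
  qed
  then have "chainP C (Y # As')" using chainP_ConsI[OF As'(3) infY CY] by blast
  moreover have "\<forall>t<Suc (Suc m). (Y # As')!t \<subseteq> Y"
  proof (intro allI impI)
    fix t assume "t < Suc (Suc m)"
    then show "(Y # As')!t \<subseteq> Y" using As' Y'(1) by (cases t) auto
  qed
  ultimately show ?case using As'(1) by (intro exI[of _ "Y # As'"]) auto
qed


lemma PHF:
  assumes "finite F" "F \<noteq> {}" "\<forall>i<L. w i \<in> F" "L = n * card F"
  shows "\<exists>\<gamma>\<in>F. n \<le> card {i. i < L \<and> w i = \<gamma>}"
proof (rule ccontr)
  assume H: "\<not> (\<exists>\<gamma>\<in>F. n \<le> card {i. i < L \<and> w i = \<gamma>})"
  then have lt: "\<forall>\<gamma>\<in>F. card {i. i < L \<and> w i = \<gamma>} \<le> n - 1" by auto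
  have n: "n \<ge> 1"
  proof (rule ccontr)
    assume "\<not> n \<ge> 1" then have "n = 0" by simp
    then show False using H assms(2) by auto
  qed
  have cF: "card F \<ge> 1" using assms(1,2) by (simp add: Suc_leI card_gt_0_iff)
  have eq: "{..<L} = (\<Union>\<gamma>\<in>F. {i. i < L \<and> w i = \<gamma>})" using assms(3) by auto
  have "L = card {..<L}" by simp
  also have "\<dots> = card (\<Union>\<gamma>\<in>F. {i. i < L \<and> w i = \<gamma>})" using eq by (rule arg_cong)
  also have "\<dots> \<le> (\<Sum>\<gamma>\<in>F. card {i. i < L \<and> w i = \<gamma>})" by (rule card_UN_le[OF assms(1)])
  also have "\<dots> \<le> (\<Sum>\<gamma>\<in>F. n - 1)" by (rule sum_mono) (use lt in auto)
  also have "\<dots> = card F * (n - 1)" by simp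
  finally have "n * card F \<le> card F * (n - 1)" using assms(4) by simp
  then have "card F * n \<le> card F * (n - 1)" by (simp add: mult.commute)
  then have "n \<le> n - 1" using cF by simp
  then show False using n by simp
qed

lemma GF:
  fixes c :: "'b list \<Rightarrow> nat"
  assumes X: "infinite X" and x0: "x0 \<in> tuples X d"
  shows "c ` tuples X d \<subseteq> F \<Longrightarrow> finite F \<Longrightarrow> distinct is \<Longrightarrow> set is \<subseteq> {..<d} \<Longrightarrow>
    \<exists>Ls \<gamma>. \<gamma> \<in> F \<and> length Ls = length is \<and>
    (\<forall>t<length is. length (Ls!t) = n \<and> distinct (Ls!t) \<and> set (Ls!t) \<subseteq> X) \<and>
    (\<forall>y\<in>tuples X d. gpt is Ls x0 y \<longrightarrow> c y = \<gamma>)"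
proof (induction "is" arbitrary: c F)
  case Nil
  have "y = x0" if "y \<in> tuples X d" "gpt [] [] x0 y" for y
    using that by (intro nth_equalityI) (auto simp: gpt_def)
  then show ?case using Nil x0 by (intro exI[of _ "[]"] exI[of _ "c x0"]) auto
next
  case (Cons j is')
  have jd: "j < d" using Cons.prems(4) by simp
  have lx0: "length x0 = d" using x0 by (simp add: tuples_def)
  have Fne: "F \<noteq> {}" using Cons.prems(1) x0 by auto
  define L where "L = n * card F"
  obtain tl where tl: "distinct tl" "length tl = L" "set tl \<subseteq> X" using dlist_inf[OF X] by blast
  have upd: "y[j := a] \<in> tuples X d" if "y \<in> tuples X d" "a \<in> X" for y a
    using that set_update_subset_insert[of y j a] by (auto simp: tuples_def)
  define c' where "c' y = to_nat (map (\<lambda>a. c (y[j := a])) tl)" for y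
  define FV where "FV = {ws. set ws \<subseteq> F \<and> length ws = L}"
  have fFV: "finite FV" unfolding FV_def using Cons.prems(2) by (rule finite_lists_length_eq)
  have c'F: "c' ` tuples X d \<subseteq> to_nat ` FV"
  proof (rule image_subsetI)
    fix y assume y: "y \<in> tuples X d"
    have "map (\<lambda>a. c (y[j := a])) tl \<in> FV"
      unfolding FV_def using tl Cons.prems(1) upd[OF y] by auto
    then show "c' y \<in> to_nat ` FV" unfolding c'_def by blast
  qed
  obtain Ls' \<gamma>' where IH: "\<gamma>' \<in> to_nat ` FV" "length Ls' = length is'"
    "\<forall>t<length is'. length (Ls'!t) = n \<and> distinct (Ls'!t) \<and> set (Ls'!t) \<subseteq> X"
    "\<forall>y\<in>tuples X d. gpt is' Ls' x0 y \<longrightarrow> c' y = \<gamma>'"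
    using Cons.IH[OF c'F finite_imageI[OF fFV]] Cons.prems(3,4) by auto
  obtain w where w: "w \<in> FV" "\<gamma>' = to_nat w" using IH(1) by blast
  have "\<exists>\<gamma>\<in>F. n \<le> card {i. i < L \<and> w ! i = \<gamma>}"
    by (rule PHF[OF Cons.prems(2) Fne _ L_def]) (use w in \<open>auto simp: FV_def\<close>)
  then obtain \<gamma> where g: "\<gamma> \<in> F" "n \<le> card {i. i < L \<and> w ! i = \<gamma>}" by blast
  obtain ix where ix: "distinct ix" "length ix = n" "set ix \<subseteq> {i. i < L \<and> w ! i = \<gamma>}"
    using dlist_sub[OF _ g(2)] by auto
  define l where "l = map (\<lambda>i. tl ! i) ix"
  have injtl: "inj_on (\<lambda>i. tl ! i) (set ix)"
  proof (rule inj_onI)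
    fix a b assume ab: "a \<in> set ix" "b \<in> set ix" "tl ! a = tl ! b"
    then have "a < length tl" "b < length tl" using ix(3) tl(2) by auto
    then show "a = b" using ab(3) by (simp add: nth_eq_iff_index_eq[OF tl(1)])
  qed
  have l: "distinct l" "length l = n" "set l \<subseteq> X"
    using ix injtl tl unfolding l_def by (auto simp: distinct_map dest!: nth_mem[of _ tl] intro: subsetD[OF tl(3)])
  show ?case
  proof (intro exI[of _ "l # Ls'"] exI[of _ \<gamma>] conjI)
    show "\<gamma> \<in> F" by (rule g(1))
    show "length (l # Ls') = length (j # is')" using IH(2) by simp
    show "\<forall>t<length (j # is'). length ((l # Ls') ! t) = n \<and> distinct ((l # Ls') ! t) \<and> set ((l # Ls') ! t) \<subseteq> X"
    proof (intro allI impI)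
      fix t assume "t < length (j # is')"
      then show "length ((l # Ls') ! t) = n \<and> distinct ((l # Ls') ! t) \<and> set ((l # Ls') ! t) \<subseteq> X"
        using l IH(3) by (cases t) auto
    qed
    show "\<forall>y\<in>tuples X d. gpt (j # is') (l # Ls') x0 y \<longrightarrow> c y = \<gamma>"
    proof (intro ballI impI)
      fix y assume y: "y \<in> tuples X d" and g2: "gpt (j # is') (l # Ls') x0 y"
      have "y ! j \<in> set l" using g2 unfolding gpt_def by (auto dest: spec[of _ 0])
      then obtain i where i: "i \<in> set ix" "y ! j = tl ! i" unfolding l_def by auto
      have iL: "i < L" "w ! i = \<gamma>" using i(1) ix(3) by auto
      define y' where "y' = y[j := x0 ! j]"
      have "x0 ! j \<in> X" using x0 jd lx0 by (auto simp: tuples_def)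
      then have y': "y' \<in> tuples X d" unfolding y'_def by (rule upd[OF y])
      have ly: "length y = d" using y by (simp add: tuples_def)
      have "gpt is' Ls' x0 y'"
        unfolding gpt_def
      proof (intro conjI allI impI)
        show "length y' = length x0" using ly lx0 by (simp add: y'_def)
        fix i' assume "i' < length x0" "i' \<notin> set is'"
        then show "y' ! i' = x0 ! i'" using g2 lx0 ly jd unfolding y'_def gpt_def by (cases "i' = j") auto
      next
        fix t assume t: "t < length is'"
        have "is' ! t \<noteq> j" using Cons.prems(3) t by (auto simp: in_set_conv_nth)
        then show "y' ! (is' ! t) \<in> set (Ls' ! t)" using g2 t unfolding gpt_def y'_def
          by (auto dest: spec[of _ "Suc t"])
      qed
      then have "c' y' = \<gamma>'" using IH(4) y' by blast
      then have "map (\<lambda>a. c (y'[j := a])) tl = w" unfolding c'_def w(2) by simp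
      moreover have "map (\<lambda>a. c (y'[j := a])) tl ! i = c (y'[j := tl ! i])" using iL tl(2) by simp
      ultimately have "c (y'[j := tl ! i]) = w ! i" by simp
      moreover have "y'[j := tl ! i] = y[j := y ! j]" unfolding y'_def using i(2) by simp
      then have "y'[j := tl ! i] = y" by (simp only: list_update_id)
      ultimately show "c y = \<gamma>" using iL by simp
    qed
  qed
qed



lemma dist_full: "is_template d k P \<Longrightarrow> distinguisher d P {..<d}"
  unfolding is_template_def distinguisher_def by (auto intro: nth_equalityI)

lemma e_num_witness: "is_template d k P \<Longrightarrow> \<exists>I. distinguisher d P I \<and> card I = e_num d P"
  unfolding e_num_def by (rule LeastI_ex) (use dist_full in blast)

lemma e_num_le: "distinguisher d P I \<Longrightarrow> e_num d P \<le> card I"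
  unfolding e_num_def by (rule Least_le) blast

lemma e_num_pos: assumes "is_template d k P" "2 \<le> k" shows "1 \<le> e_num d P"
proof (rule ccontr)
  assume "\<not> 1 \<le> e_num d P"
  then obtain I where I: "distinguisher d P I" "card I = 0" using e_num_witness[OF assms(1)] by auto
  have "finite I" using I(1) finite_subset[of I "{..<d}"] by (auto simp: distinguisher_def)
  then have "I = {}" using I(2) by simp
  then have "\<forall>x\<in>P. \<forall>y\<in>P. x = y" using I(1) by (auto simp: distinguisher_def)
  then have "card P \<le> 1" using card_le_Suc0_iff_eq[of P] assms(1) by (auto simp: is_template_def)
  then show False using assms by (auto simp: is_template_def)
qed

lemma hom_dist:
  assumes "template_hom d P Q f" "distinguisher d Q I" shows "distinguisher d P I"
  unfolding distinguisher_def
proof (intro conjI ballI impI)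
  show "I \<subseteq> {..<d}" using assms(2) by (simp add: distinguisher_def)
  fix x y assume xy: "x \<in> P" "y \<in> P" "x \<noteq> y"
  have "f x \<noteq> f y" "f x \<in> Q" "f y \<in> Q" using assms(1) xy unfolding template_hom_def inj_on_def by blast+
  then obtain i where i: "i \<in> I" "f x ! i \<noteq> f y ! i" using assms(2) unfolding distinguisher_def by blast
  have "i < d" using i(1) assms(2) by (auto simp: distinguisher_def)
  have "x ! i \<noteq> y ! i"
  proof
    assume "x ! i = y ! i"
    then have "f x ! i = f y ! i" using assms(1) xy(1,2) \<open>i < d\<close> unfolding template_hom_def by blast
    then show False using i(2) by simp
  qed
  then show "\<exists>i\<in>I. x ! i \<noteq> y ! i" using i(1) by blast
qed

lemma K_exists: "\<exists>K. card_minus_is X m K"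
proof -
  let ?S = "{r. \<exists>A. succ_ge m A X \<and> r = |A|}"
  have "succ_ge m X X" unfolding succ_ge_def
  proof
    assume "\<exists>B. csucc_rel m X B \<and> |B| <o |X|"
    then obtain B where B: "csucc_rel m X B" "|B| <o |X|" by blast
    have "|X| \<le>o |B|" by (rule csucc_mono[OF B(1)])
    then show False using not_ordLess_ordLeq[OF B(2)] by simp
  qed
  then have SX: "|X| \<in> ?S" by blast
  obtain z where z: "z \<in> ?S" "\<And>y. (y, z) \<in> ordLess \<Longrightarrow> y \<notin> ?S"
    using wfE_min[OF wf_ordLess SX] by blast
  obtain K where K: "succ_ge m K X" "z = |K|" using z(1) by blast
  have "|K| \<le>o |A|" if "succ_ge m A X" for A
  proof -
    have "|A| \<in> ?S" using that by blast
    then have "\<not> |A| <o |K|" using z(2) unfolding K(2) by blast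
    then show ?thesis using wo_total[of A K] by simp
  qed
  then show ?thesis using K(1) unfolding card_minus_is_def by blast
qed

lemma finchain: fixes K X :: "'u set" shows "finite K \<Longrightarrow> infinite X \<Longrightarrow> \<exists>B. csucc_rel m K B \<and> finite B"
proof (induction m)
  case 0 then show ?case using card_of_refl by auto
next
  case (Suc m)
  then obtain B where B: "csucc_rel m K B" "finite B" by blast
  let ?F = "Field (cardSuc |B| )"
  have fF: "finite ?F" using cardSuc_finite[OF card_of_Card_order, of B] B(2) by (simp add: Field_card_of)
  have "|?F| \<le>o |X|" using fin_less[OF fF Suc.prems(2)] ordLess_imp_ordLeq by blast
  then obtain B' where B': "B' \<subseteq> X" "|?F| =o |B'|"
    using internalize_card_of_ordLeq[of ?F "|X|"] by (auto simp: Field_card_of)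
  have FB: "|?F| =o cardSuc |B|" by (simp add: card_of_Field_ordIso cardSuc_Card_order card_of_Card_order)
  have B'2: "|B'| =o cardSuc |B|" by (rule ordIso_transitive[OF ordIso_symmetric[OF B'(2)] FB])
  have fB': "finite B'" using card_of_ordIso_finite[OF B'(2)] fF by simp
  have "csucc_rel (Suc m) K B'" using B(1) B'2 by (simp only: csucc_rel.simps) blast
  then show ?case using fB' by blast
qed

lemma K_infinite: assumes "succ_ge m K X" "infinite X" shows "infinite K"
proof
  assume "finite K"
  then obtain B where B: "csucc_rel m K B" "finite B" using finchain assms(2) by blast
  have "|B| <o |X|" by (rule fin_less[OF B(2) assms(2)])
  then show False using assms(1) B(1) unfolding succ_ge_def by blast
qed



lemma upper:
  assumes k2: "2 \<le> k" and tmpl: "\<forall>P\<in>\<P>. is_template d k P" and X: "infinite X"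
    and e_le: "\<forall>P\<in>\<P>. e \<le> e_num d P" and e1: "1 \<le> e"
    and K: "card_minus_is X (e - 1) K"
  shows "\<exists>\<phi>. proper_coloring (tuples X d) (L_edges X d k \<P>) K \<phi>"
proof -
  define m where "m = e - 1"
  have sg: "succ_ge m K X" using K unfolding card_minus_is_def m_def by blast
  have infK: "infinite K" by (rule K_infinite[OF sg X])
  have "WSm m K X" by (rule bridge[OF infK]) (use sg in \<open>simp add: succ_ge_def\<close>)
  then obtain \<phi> where \<phi>: "dist_col K m d X \<phi>" using UB[OF infK] by blast
  define LS where "LS = {js. set js \<subseteq> {..<d} \<and> length js \<le> m}"
  have fLS: "finite LS" unfolding LS_def by (rule finite_lists_length_le) simp
  have img: "\<phi> ` tuples X d \<subseteq> LS \<times> K"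
  proof (rule image_subsetI)
    fix x assume "x \<in> tuples X d"
    then have "length (fst (\<phi> x)) \<le> m" "set (fst (\<phi> x)) \<subseteq> {..<d}" "snd (\<phi> x) \<in> K"
      using \<phi> unfolding dist_col_def by blast+
    then show "\<phi> x \<in> LS \<times> K" unfolding LS_def by (simp add: mem_Times_iff)
  qed
  have "|LS| \<le>o |K|" using fin_less[OF fLS infK] ordLess_imp_ordLeq by blast
  then have "|LS \<times> K| \<le>o |K|"
    by (intro card_of_Times_ordLeq_infinite_Field) (simp_all add: Field_card_of card_of_card_order_on infK card_of_mono1)
  then have "|\<phi> ` tuples X d| \<le>o |K|" using card_of_mono1[OF img] ordLeq_transitive by blast
  then obtain h where h: "inj_on h (\<phi> ` tuples X d)" "h ` \<phi> ` tuples X d \<subseteq> K"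
    using card_of_ordLeq[of "\<phi> ` tuples X d" K] by blast
  have "proper_coloring (tuples X d) (L_edges X d k \<P>) K (h \<circ> \<phi>)"
    unfolding proper_coloring_def
  proof (intro conjI ballI)
    show "(h \<circ> \<phi>) ` tuples X d \<subseteq> K" using h(2) by (simp add: image_comp)
    fix Q assume Q: "Q \<in> L_edges X d k \<P>"
    then have QT: "Q \<subseteq> tuples X d" "finite Q" "card Q = k" and "\<exists>P\<in>\<P>. hom_image d P Q"
      unfolding L_edges_def by auto
    then obtain P f where P: "P \<in> \<P>" "template_hom d P Q f" unfolding hom_image_def by blast
    show "\<exists>u\<in>Q. \<exists>v\<in>Q. (h \<circ> \<phi>) u \<noteq> (h \<circ> \<phi>) v"
    proof (rule ccontr)
      assume "\<not> ?thesis"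
      then have H: "\<forall>u\<in>Q. \<forall>v\<in>Q. h (\<phi> u) = h (\<phi> v)" unfolding o_def by blast
      have "Q \<noteq> {}" using QT k2 by auto
      then obtain q0 where q0: "q0 \<in> Q" by blast
      have same: "\<phi> u = \<phi> q0" if "u \<in> Q" for u
      proof (rule inj_onD[OF h(1)])
        show "h (\<phi> u) = h (\<phi> q0)" using H that q0 by blast
        show "\<phi> u \<in> \<phi> ` tuples X d" "\<phi> q0 \<in> \<phi> ` tuples X d" using that q0 QT(1) by auto
      qed
      define js where "js = fst (\<phi> q0)"
      have q0T: "q0 \<in> tuples X d" using q0 QT(1) by blast
      have jsd: "set js \<subseteq> {..<d}" "length js \<le> m" using \<phi> q0T unfolding dist_col_def js_def by auto
      have "distinguisher d Q (set js)"
        unfolding distinguisher_def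
      proof (intro conjI ballI impI)
        show "set js \<subseteq> {..<d}" by (rule jsd(1))
        fix x y assume xy: "x \<in> Q" "y \<in> Q" "x \<noteq> y"
        have "x \<in> tuples X d" "y \<in> tuples X d" using xy QT(1) by auto
        moreover have "\<phi> x = \<phi> y" "\<phi> x = \<phi> q0" using same xy by auto
        ultimately have "\<exists>i\<in>set (fst (\<phi> x)). x ! i \<noteq> y ! i"
          using \<phi> xy(3) unfolding dist_col_def by blast
        then show "\<exists>i\<in>set js. x ! i \<noteq> y ! i" using \<open>\<phi> x = \<phi> q0\<close> unfolding js_def by simp
      qed
      then have "distinguisher d P (set js)" by (rule hom_dist[OF P(2)])
      then have "e_num d P \<le> card (set js)" by (rule e_num_le)
      also have "\<dots> \<le> length js" by (rule card_length)
      finally have "e_num d P \<le> m" using jsd(2) by simp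
      moreover have "e \<le> e_num d P" using e_le P(1) by blast
      ultimately show False using e1 unfolding m_def by linarith
    qed
  qed
  then show ?thesis by blast
qed


lemma lower:
  fixes \<phi> :: "'b list \<Rightarrow> 'b" and C X :: "'b set" and P0 :: "'a list set"
  assumes k2: "2 \<le> k" and P0: "P0 \<in> \<P>" "is_template d k P0" and X: "infinite X"
    and eP0: "e_num d P0 = e" and e1: "1 \<le> e"
    and nsg: "\<not> succ_ge (e - 1) C X" and col: "\<phi> ` tuples X d \<subseteq> C"
  shows "\<not> proper_coloring (tuples X d) (L_edges X d k \<P>) C \<phi>"
proof
  assume pc: "proper_coloring (tuples X d) (L_edges X d k \<P>) C \<phi>"
  define m where "m = e - 1"
  obtain B where B: "csucc_rel m C B" "|B| <o |X|" using nsg unfolding succ_ge_def m_def by blast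
  obtain I0 where I0: "distinguisher d P0 I0" "card I0 = e" using e_num_witness[OF P0(2)] eP0 by auto
  have isd0: "I0 \<subseteq> {..<d}" using I0(1) unfolding distinguisher_def by blast
  have fI0: "finite I0" using finite_subset[OF isd0] by simp
  obtain iss where iss: "set iss = I0" "distinct iss" using finite_distinct_list[OF fI0] by blast
  have "length iss = e" using distinct_card[OF iss(2)] iss(1) I0(2) by simp
  then have lis: "length iss = Suc m" using e1 unfolding m_def by simp
  have isd: "set iss \<subseteq> {..<d}" using isd0 iss(1) by simp
  have "X \<noteq> {}" using X by auto
  then obtain x where x: "x \<in> X" by blast
  define x0 where "x0 = replicate d x"
  have x0: "x0 \<in> tuples X d" unfolding x0_def tuples_def using x by auto
  have lx0: "length x0 = d" unfolding x0_def by simp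
  have grid: "\<exists>Ls. length Ls = length iss \<and> (\<forall>t<length iss. length (Ls!t) = k \<and> distinct (Ls!t) \<and> set (Ls!t) \<subseteq> X) \<and>
     (\<forall>y1\<in>tuples X d. \<forall>y2\<in>tuples X d. gpt iss Ls x0 y1 \<longrightarrow> gpt iss Ls x0 y2 \<longrightarrow> \<phi> y1 = \<phi> y2)"
  proof (cases "finite C")
    case True
    obtain h :: "'b \<Rightarrow> nat" and N where h: "h ` C = {i. i < N}" "inj_on h C"
      using finite_imp_inj_to_nat_seg[OF True] by blast
    have hc: "(h \<circ> \<phi>) ` tuples X d \<subseteq> h ` C" using col by auto
    obtain Ls \<gamma> where G: "\<gamma> \<in> h ` C" "length Ls = length iss"
      "\<forall>t<length iss. length (Ls!t) = k \<and> distinct (Ls!t) \<and> set (Ls!t) \<subseteq> X"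
      "\<forall>y\<in>tuples X d. gpt iss Ls x0 y \<longrightarrow> (h \<circ> \<phi>) y = \<gamma>"
      using GF[OF X x0 hc finite_imageI[OF True] iss(2) isd, of k] by blast
    show ?thesis
    proof (intro exI[of _ Ls] conjI ballI impI)
      show "length Ls = length iss" by (rule G(2))
      show "\<forall>t<length iss. length (Ls!t) = k \<and> distinct (Ls!t) \<and> set (Ls!t) \<subseteq> X" by (rule G(3))
      fix y1 y2 assume y: "y1 \<in> tuples X d" "y2 \<in> tuples X d" "gpt iss Ls x0 y1" "gpt iss Ls x0 y2"
      have "h (\<phi> y1) = h (\<phi> y2)" using G(4) y by simp
      moreover have "\<phi> y1 \<in> C" "\<phi> y2 \<in> C" using col y(1,2) by auto
      ultimately show "\<phi> y1 = \<phi> y2" by (rule inj_onD[OF h(2)])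
    qed
  next
    case False
    obtain As where As: "length As = Suc m" "\<forall>t<Suc m. As!t \<subseteq> X" "chainP C As"
      using CH[OF B(1) False B(2)] by blast
    have "\<exists>Ls \<gamma>. \<gamma> \<in> C \<and> length Ls = length iss \<and>
      (\<forall>t<length iss. length (Ls!t) = k \<and> distinct (Ls!t) \<and> set (Ls!t) \<subseteq> As!t) \<and>
      (\<forall>y\<in>tuples X d. gpt iss Ls x0 y \<longrightarrow> \<phi> y = \<gamma>)"
      by (rule GI[OF col iss(2) isd _ _ As(3) x0]) (use As lis in simp_all)
    then obtain Ls \<gamma> where G: "length Ls = length iss"
      "\<forall>t<length iss. length (Ls!t) = k \<and> distinct (Ls!t) \<and> set (Ls!t) \<subseteq> As!t"
      "\<forall>y\<in>tuples X d. gpt iss Ls x0 y \<longrightarrow> \<phi> y = \<gamma>" by blast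
    show ?thesis
    proof (intro exI[of _ Ls] conjI ballI impI allI)
      show "length Ls = length iss" by (rule G(1))
      fix t assume t: "t < length iss"
      then show "length (Ls!t) = k" "distinct (Ls!t)" using G(2) by auto
      have "As!t \<subseteq> X" using As(2) t lis by simp
      then show "set (Ls!t) \<subseteq> X" using G(2) t by blast
    next
      fix y1 y2 assume y: "y1 \<in> tuples X d" "y2 \<in> tuples X d" "gpt iss Ls x0 y1" "gpt iss Ls x0 y2"
      then show "\<phi> y1 = \<phi> y2" using G(3) by simp
    qed
  qed
  then obtain Ls where Ls: "length Ls = length iss" "\<forall>t<length iss. length (Ls!t) = k \<and> distinct (Ls!t) \<and> set (Ls!t) \<subseteq> X"
     "\<forall>y1\<in>tuples X d. \<forall>y2\<in>tuples X d. gpt iss Ls x0 y1 \<longrightarrow> gpt iss Ls x0 y2 \<longrightarrow> \<phi> y1 = \<phi> y2" by blast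
  have fP0: "finite P0" "card P0 = k" "\<forall>p\<in>P0. length p = d" using P0(2) unfolding is_template_def by auto
  define V where "V i = (\<lambda>p. p ! i) ` P0" for i
  have "\<forall>i\<in>I0. \<exists>g. \<exists>t<length iss. iss!t = i \<and> inj_on g (V i) \<and> g ` V i \<subseteq> set (Ls!t)"
  proof
    fix i assume "i \<in> I0"
    then obtain t where t: "t < length iss" "iss!t = i" using iss(1) by (auto simp: in_set_conv_nth)
    have fV: "finite (V i)" unfolding V_def using fP0(1) by simp
    have "card (V i) \<le> card P0" unfolding V_def by (rule card_image_le[OF fP0(1)])
    also have "\<dots> = card (set (Ls!t))" using Ls(2) t fP0(2) distinct_card by metis
    finally obtain g where "g ` V i \<subseteq> set (Ls!t)" "inj_on g (V i)"
      using card_le_inj[OF fV] by blast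
    then show "\<exists>g. \<exists>t<length iss. iss!t = i \<and> inj_on g (V i) \<and> g ` V i \<subseteq> set (Ls!t)" using t by blast
  qed
  from bchoice[OF this] obtain G where G: "\<forall>i\<in>I0. \<exists>t<length iss. iss!t = i \<and> inj_on (G i) (V i) \<and> G i ` V i \<subseteq> set (Ls!t)"
    by blast
  define f where "f p = map (\<lambda>i. if i \<in> I0 then G i (p ! i) else x0 ! i) [0..<d]" for p
  have fnth: "f p ! i = (if i \<in> I0 then G i (p ! i) else x0 ! i)" if "i < d" for p i
    using that by (simp add: f_def)
  have lf: "length (f p) = d" for p by (simp add: f_def)
  have Gin: "G i (p ! i) \<in> set (Ls ! t)" if "p \<in> P0" "t < length iss" "iss ! t = i" for p i t
  proof -
    have iI: "i \<in> I0" using that iss(1) by auto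
    then obtain t' where t': "t' < length iss" "iss!t' = i" "G i ` V i \<subseteq> set (Ls!t')" using G by blast
    have "t' = t" using t' that iss(2) nth_eq_iff_index_eq by metis
    moreover have "p ! i \<in> V i" unfolding V_def using that(1) by blast
    ultimately show ?thesis using t'(3) by blast
  qed
  have fT: "f p \<in> tuples X d" if p: "p \<in> P0" for p
    unfolding tuples_def
  proof (intro CollectI conjI subsetI)
    show "length (f p) = d" by (rule lf)
    fix z assume "z \<in> set (f p)"
    then obtain i where i: "i < d" "z = f p ! i" using lf[of p] by (auto simp: in_set_conv_nth)
    show "z \<in> X"
    proof (cases "i \<in> I0")
      case True
      then obtain t where t: "t < length iss" "iss ! t = i" using iss(1) by (auto simp: in_set_conv_nth)
      have "G i (p ! i) \<in> X" using Gin[OF p t] Ls(2) t(1) by blast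
      then show ?thesis using i True fnth by simp
    next
      case False
      then show ?thesis using i fnth x lx0 unfolding x0_def by simp
    qed
  qed
  have fg: "gpt iss Ls x0 (f p)" if p: "p \<in> P0" for p
    unfolding gpt_def
  proof (intro conjI allI impI)
    show "length (f p) = length x0" using lf lx0 by simp
    fix i assume "i < length x0" "i \<notin> set iss"
    then show "f p ! i = x0 ! i" using fnth lx0 iss(1) by simp
  next
    fix t assume t: "t < length iss"
    then have "iss ! t \<in> I0" "iss ! t < d" using iss(1) isd by auto
    then show "f p ! (iss ! t) \<in> set (Ls ! t)" using fnth Gin[OF p t refl] by simp
  qed
  have finj: "inj_on f P0"
  proof (rule inj_onI)
    fix p q assume pq: "p \<in> P0" "q \<in> P0" "f p = f q"
    show "p = q"
    proof (rule ccontr)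
      assume "p \<noteq> q"
      then obtain i where i: "i \<in> I0" "p ! i \<noteq> q ! i" using I0(1) pq unfolding distinguisher_def by blast
      have id: "i < d" using i(1) isd0 by auto
      have "G i (p ! i) = G i (q ! i)" using pq(3) fnth[OF id, of p] fnth[OF id, of q] i(1) by simp
      moreover obtain t where "inj_on (G i) (V i)" using G i(1) by blast
      moreover have "p ! i \<in> V i" "q ! i \<in> V i" unfolding V_def using pq by auto
      ultimately have "p ! i = q ! i" by (meson inj_onD)
      then show False using i(2) by simp
    qed
  qed
  have hom: "template_hom d P0 (f ` P0) f"
    unfolding template_hom_def using finj fnth by auto
  have QE: "f ` P0 \<in> L_edges X d k \<P>"
    unfolding L_edges_def
  proof (intro CollectI conjI)
    show "f ` P0 \<subseteq> tuples X d" using fT by blast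
    show "finite (f ` P0)" using fP0(1) by simp
    show "card (f ` P0) = k" using card_image[OF finj] fP0(2) by simp
    show "\<exists>P\<in>\<P>. hom_image d P (f ` P0)" using P0(1) hom unfolding hom_image_def by blast
  qed
  then obtain u v where uv: "u \<in> f ` P0" "v \<in> f ` P0" "\<phi> u \<noteq> \<phi> v"
    using pc unfolding proper_coloring_def by blast
  then obtain p q where "p \<in> P0" "q \<in> P0" "u = f p" "v = f q" by blast
  then have "\<phi> u = \<phi> v" using Ls(3) fT fg by blast
  then show False using uv(3) by simp
qed


theorem corollary2p2:
  fixes \<P> :: "'a list set set" and X :: "'b set" and d k :: nat
  assumes "2 \<le> k"
    and "\<forall>P\<in>\<P>. is_template d k P"
    and "infinite X"
  shows "(\<P> = {} \<longrightarrow>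
            (\<exists>K::'b set. chromatic_number_is (tuples X d) (L_edges X d k \<P>) K
                         \<and> finite K \<and> card K = 1))
       \<and> (\<P> \<noteq> {} \<longrightarrow>
            (let e = (LEAST n. n \<in> e_num d ` \<P>) in
             \<exists>K::'b set. chromatic_number_is (tuples X d) (L_edges X d k \<P>) K
                         \<and> card_minus_is X (e - 1) K))"
proof (intro conjI impI)
  have "X \<noteq> {}" using assms(3) by auto
  then obtain x where x: "x \<in> X" by blast
  have Tne: "replicate d x \<in> tuples X d" using x by (auto simp: tuples_def)
  {
    assume "\<P> = {}"
    then have E: "L_edges X d k \<P> = {}" by (simp add: L_edges_def)
    have "chromatic_number_is (tuples X d) (L_edges X d k \<P>) {x}"
      unfolding chromatic_number_is_def
    proof (intro conjI allI impI)
      show "\<exists>\<phi>. proper_coloring (tuples X d) (L_edges X d k \<P>) {x} \<phi>"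
        using E by (intro exI[of _ "\<lambda>_. x"]) (auto simp: proper_coloring_def)
      fix C :: "'b set" assume "\<exists>\<phi>. proper_coloring (tuples X d) (L_edges X d k \<P>) C \<phi>"
      then obtain \<phi> where "\<phi> ` tuples X d \<subseteq> C" unfolding proper_coloring_def by blast
      then have "\<phi> (replicate d x) \<in> C" using Tne by blast
      then have "inj_on (\<lambda>_. \<phi> (replicate d x)) {x} \<and> (\<lambda>_. \<phi> (replicate d x)) ` {x} \<subseteq> C" by simp
      then show "|{x}| \<le>o |C|" using card_of_ordLeq[of "{x}" C] by blast
    qed
    then show "\<exists>K::'b set. chromatic_number_is (tuples X d) (L_edges X d k \<P>) K \<and> finite K \<and> card K = 1"
      by (intro exI[of _ "{x}"]) simp
  }
  {
    assume ne: "\<P> \<noteq> {}"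
    define e where "e = (LEAST n. n \<in> e_num d ` \<P>)"
    have "\<exists>n. n \<in> e_num d ` \<P>" using ne by blast
    then have "e \<in> e_num d ` \<P>" unfolding e_def by (rule LeastI_ex)
    then obtain P0 where P0: "P0 \<in> \<P>" "e_num d P0 = e" by blast
    have e_le: "\<forall>P\<in>\<P>. e \<le> e_num d P" unfolding e_def by (intro ballI Least_le) blast
    have tP0: "is_template d k P0" using assms(2) P0(1) by blast
    have e1: "1 \<le> e" using e_num_pos[OF tP0 assms(1)] P0(2) by simp
    obtain K :: "'b set" where K: "card_minus_is X (e - 1) K" using K_exists by blast
    have "chromatic_number_is (tuples X d) (L_edges X d k \<P>) K"
      unfolding chromatic_number_is_def
    proof (intro conjI allI impI)
      show "\<exists>\<phi>. proper_coloring (tuples X d) (L_edges X d k \<P>) K \<phi>"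
        by (rule upper[OF assms(1,2,3) e_le e1 K])
      fix C :: "'b set" assume "\<exists>\<phi>. proper_coloring (tuples X d) (L_edges X d k \<P>) C \<phi>"
      then obtain \<phi> where pc: "proper_coloring (tuples X d) (L_edges X d k \<P>) C \<phi>" by blast
      show "|K| \<le>o |C|"
      proof (rule ccontr)
        assume nle: "\<not> |K| \<le>o |C|"
        have "\<not> succ_ge (e - 1) C X"
        proof
          assume "succ_ge (e - 1) C X"
          then have "|K| \<le>o |C|" using K unfolding card_minus_is_def by blast
          then show False using nle by simp
        qed
        moreover have "\<phi> ` tuples X d \<subseteq> C" using pc unfolding proper_coloring_def by blast
        ultimately have "\<not> proper_coloring (tuples X d) (L_edges X d k \<P>) C \<phi>"
          by (rule lower[OF assms(1) P0(1) tP0 assms(3) P0(2) e1])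
        then show False using pc by simp
      qed
    qed
    then show "let e = (LEAST n. n \<in> e_num d ` \<P>) in
             \<exists>K::'b set. chromatic_number_is (tuples X d) (L_edges X d k \<P>) K \<and> card_minus_is X (e - 1) K"
      using K unfolding e_def Let_def by blast
  }
qed

end
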